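(* Let $A, B$ be $2n\times 2n$ real symmetric positive semidefinite matrices whose kernels are symplectic subspaces of $\mathbb{R}^{2n}$. If $d(A) \prec^w_+ d(B)$, then there exist a probability vector $(p(\pi))_{\pi\in S_n}$, symplectic matrices $K_\pi\in\operatorname{Sp}(2n)$ ($\pi\in S_n$) and $M\in\operatorname{Sp}(2n)$, and $2n\times 2n$ diagonal matrices $D_\pi$ ($\pi\in S_n$) with strictly positive diagonal entries, such that $$A = \sum_{\pi\in S_n} p(\pi)\,(K_\pi D_\pi M)^T B\, (K_\pi D_\pi M).$$
   Context: Let $J = \begin{bmatrix} 0 & I_n \\ -I_n & 0\end{bmatrix}$. A real $2n\times 2n$ matrix $M$ is symplectic if $M^TJM = J$; $\operatorname{Sp}(2n)$ denotes the group of such matrices. A linear subspace $W\subseteq\mathbb{R}^{2n}$ is symplectic if for every $0\neq u\in W$ there is $v\in W$ with $u^TJv\neq 0$. For a real symmetric positive semidefinite $2n\times 2n$ matrix $A$ whose kernel is a symplectic subspace, there is $M\in\operatorname{Sp}(2n)$ with $M^TAM = D\oplus D$ where $D$ is an $n\times n$ diagonal matrix with non-negative entries, unique up to permutation of its diagonal entries; these are the symplectic eigenvalues of $A$, and $d(A) = (d_1(A),\dots,d_n(A))$ denotes them in non-decreasing order. $S_n$ is the symmetric group on $\{1,\dots,n\}$. An $n\times n$ real matrix is doubly stochastic if its entries are non-negative and every row and column sums to $1$; an $n\times n$ real matrix $S=[s_{ij}]$ is doubly superstochastic if there is a doubly stochastic $E=[e_{ij}]$ with $s_{ij}\ge e_{ij}$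 for all $i,j$. For $x,y\in\mathbb{R}^n$, $x\prec^w_+ y$ means $x = Sy$ for some doubly superstochastic $n\times n$ matrix $S$ all of whose entries are strictly positive. *)

theory Defs
  imports "HOL-Analysis.Analysis" "HOL-Combinatorics.Permutations"
begin

text \<open>R^{2n} is indexed by the finite type 'n + 'n: Inl i is coordinate i, Inr i is coordinate n+i.\<close>

type_synonym ('n) mat2n = "real ^ ('n + 'n) ^ ('n + 'n)"

definition Jmat :: "('n::finite) mat2n" where
  "Jmat = (\<chi> i j. (case (i, j) of
      (Inl a, Inr b) \<Rightarrow> (if a = b then 1 else 0)
    | (Inr a, Inl b) \<Rightarrow> (if a = b then -1 else 0)
    | _ \<Rightarrow> 0))"

definition symplectic :: "('n::finite) mat2n \<Rightarrow> bool" where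
  "symplectic M \<longleftrightarrow> transpose M ** Jmat ** M = Jmat"

definition Sp :: "('n::finite) mat2n set" where
  "Sp = {M. symplectic M}"

definition symplectic_subspace :: "(real ^ ('n::finite + 'n)) set \<Rightarrow> bool" where
  "symplectic_subspace W \<longleftrightarrow> subspace W \<and>
     (\<forall>u\<in>W. u \<noteq> 0 \<longrightarrow> (\<exists>v\<in>W. u \<bullet> (Jmat *v v) \<noteq> 0))"

definition kernel :: "('n::finite) mat2n \<Rightarrow> (real ^ ('n + 'n)) set" where
  "kernel A = {x. A *v x = 0}"

definition psd_sym :: "('n::finite) mat2n \<Rightarrow> bool" where
  "psd_sym A \<longleftrightarrow> transpose A = A \<and> (\<forall>x. 0 \<le> x \<bullet> (A *v x))"

definition diag2 :: "('n::finite \<Rightarrow> real) \<Rightarrow> 'n mat2n" where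
  "diag2 d = (\<chi> i j. if i = j then (case i of Inl a \<Rightarrow> d a | Inr a \<Rightarrow> d a) else 0)"

definition symp_eigs :: "('n::{finite,linorder}) mat2n \<Rightarrow> ('n \<Rightarrow> real)" where
  "symp_eigs A = (THE d. mono d \<and> (\<forall>i. 0 \<le> d i) \<and>
      (\<exists>M \<in> Sp. transpose M ** A ** M = diag2 d))"

definition doubly_stochastic :: "real ^ ('n::finite) ^ 'n \<Rightarrow> bool" where
  "doubly_stochastic E \<longleftrightarrow> (\<forall>i j. 0 \<le> E $ i $ j) \<and>
     (\<forall>i. (\<Sum>j\<in>UNIV. E $ i $ j) = 1) \<and> (\<forall>j. (\<Sum>i\<in>UNIV. E $ i $ j) = 1)"

definition doubly_superstochastic :: "real ^ ('n::finite) ^ 'n \<Rightarrow> bool" where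
  "doubly_superstochastic S \<longleftrightarrow>
     (\<exists>E. doubly_stochastic E \<and> (\<forall>i j. E $ i $ j \<le> S $ i $ j))"

definition wsub_plus :: "('n::finite \<Rightarrow> real) \<Rightarrow> ('n \<Rightarrow> real) \<Rightarrow> bool" where
  "wsub_plus x y \<longleftrightarrow> (\<exists>S :: real ^ 'n ^ 'n. doubly_superstochastic S \<and>
     (\<forall>i j. 0 < S $ i $ j) \<and> (\<forall>i. x i = (\<Sum>j\<in>UNIV. S $ i $ j * y j)))"

definition diagonal_pos :: "('n::finite) mat2n \<Rightarrow> bool" where
  "diagonal_pos D \<longleftrightarrow> (\<forall>i j. i \<noteq> j \<longrightarrow> D $ i $ j = 0) \<and> (\<forall>i. 0 < D $ i $ i)"

end

theory Submission
  imports Defs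
begin


lemma sum_UNIV_Plus: "(\<Sum>x\<in>(UNIV::('a::finite + 'b::finite) set). f x) = (\<Sum>a\<in>UNIV. f (Inl a)) + (\<Sum>b\<in>UNIV. f (Inr b))"
proof -
  have "(\<Sum>x\<in>(UNIV::('a + 'b) set). f x) = sum f (UNIV <+> UNIV)" by simp
  also have "\<dots> = (\<Sum>a\<in>UNIV. f (Inl a)) + (\<Sum>b\<in>UNIV. f (Inr b))"
    by (subst sum.Plus) (auto simp: o_def)
  finally show ?thesis .
qed

lemma sum_delta_mult: "(\<Sum>b\<in>UNIV. (if (a::'a::finite) = b then c else 0) * g b) = (c::real) * g a"
proof -
  have "(\<Sum>b\<in>UNIV. (if a = b then c else 0) * g b) = (\<Sum>b\<in>UNIV. (if b = a then c * g a else 0))"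
    by (rule sum.cong) auto
  also have "\<dots> = c * g a" by simp
  finally show ?thesis .
qed

lemma J_mulv_Inl [simp]: "(Jmat *v x) $ Inl a = x $ Inr a"
  by (simp add: Jmat_def matrix_vector_mult_def sum_UNIV_Plus sum_delta_mult)

lemma J_mulv_Inr [simp]: "(Jmat *v x) $ Inr a = - x $ Inl a"
  by (simp add: Jmat_def matrix_vector_mult_def sum_UNIV_Plus sum_delta_mult)

lemma mv_neg_right: "A *v (- x) = - (A *v (x::real^'n))"
  by (simp add: matrix_vector_mult_def vec_eq_iff sum_negf)

lemma mv_neg_left: "(- A) *v x = - (A *v (x::real^'n))"
  by (simp add: matrix_vector_mult_def vec_eq_iff sum_negf)

lemma vec_eq_Plus: "(x::'a^('n::finite+'n)) = y \<longleftrightarrow> (\<forall>a. x $ Inl a = y $ Inl a) \<and> (\<forall>a. x $ Inr a = y $ Inr a)"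
  by (metis sum.exhaust vec_eq_iff)

lemma JJ_v: "Jmat *v (Jmat *v x) = - (x::real^('n::finite+'n))"
  by (simp add: vec_eq_Plus)

lemma Jt_v: "transpose Jmat *v x = - (Jmat *v (x::real^('n::finite+'n)))"
proof -
  have "transpose (Jmat::'n mat2n) = - Jmat"
    by (simp add: Jmat_def transpose_def vec_eq_iff split: sum.splits)
  then show ?thesis by (simp add: matrix_vector_mult_def vec_eq_iff sum_negf)
qed

lemma J_transpose: "transpose (Jmat::('n::finite) mat2n) = - Jmat"
  by (simp add: Jmat_def transpose_def vec_eq_iff split: sum.splits)

lemma inner_J: "x \<bullet> (Jmat *v y) = - (y \<bullet> (Jmat *v (x::real^('n::finite+'n))))"
  by (simp add: inner_vec_def sum_UNIV_Plus sum_negf algebra_simps)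

lemma inner_J_J: "(Jmat *v x) \<bullet> (Jmat *v (y::real^('n::finite+'n))) = x \<bullet> y"
  by (simp add: inner_vec_def sum_UNIV_Plus algebra_simps)

lemma tmm_entry: "(transpose X ** Y ** Z) $ a $ b = (column a X) \<bullet> (Y *v column b (Z::real^'n^'n))"
proof -
  have l: "(transpose X ** Y ** Z) $ a $ b = (\<Sum>s\<in>UNIV. \<Sum>r\<in>UNIV. X$r$a * Y$r$s * Z$s$b)"
    by (simp add: matrix_matrix_mult_def transpose_def sum_distrib_right)
  have r: "(column a X) \<bullet> (Y *v column b Z) = (\<Sum>r\<in>UNIV. \<Sum>s\<in>UNIV. X$r$a * Y$r$s * Z$s$b)"
    by (simp add: matrix_vector_mult_def inner_vec_def column_def sum_distrib_left mult.assoc)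
  show ?thesis unfolding l r by (rule sum.swap)
qed



definition om :: "real^('n::finite+'n) \<Rightarrow> real^('n+'n) \<Rightarrow> real" where
  "om x y = x \<bullet> (Jmat *v y)"

definition TT :: "('n::finite) mat2n \<Rightarrow> 'n mat2n" where
  "TT A = - (Jmat ** A)"

lemma TT_v: "TT A *v x = - (Jmat *v (A *v x))"
  by (simp add: TT_def mv_neg_left matrix_vector_mul_assoc)

lemma om_anti: "om x y = - om y x"
  unfolding om_def by (rule inner_J)

lemma om_self: "om x x = 0"
  using om_anti[of x x] by simp

lemma sym_inner: "transpose A = A \<Longrightarrow> x \<bullet> (A *v y) = y \<bullet> (A *v (x::real^'n))"
  by (metis dot_lmul_matrix inner_commute transpose_matrix_vector)

lemma sym_inner': "transpose A = A \<Longrightarrow> x \<bullet> (A *v y) = (A *v x) \<bullet> (y::real^'n)"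
  by (metis sym_inner inner_commute)

lemma skewT:
  assumes "transpose A = A"
  shows "(TT A *v u) \<bullet> (A *v w) = - (u \<bullet> (A *v (TT A *v w)))"
proof -
  have "(TT A *v u) \<bullet> (A *v w) = - ((Jmat *v (A *v u)) \<bullet> (A *v w))" by (simp add: TT_v)
  also have "\<dots> = (A *v u) \<bullet> (Jmat *v (A *v w))"
    by (metis inner_J inner_commute minus_minus)
  also have "\<dots> = u \<bullet> (A *v (Jmat *v (A *v w)))" using sym_inner'[OF assms] by metis
  finally show ?thesis by (simp add: TT_v mv_neg_right)
qed

lemma TT_A: "A *v x = Jmat *v (TT A *v x)"
  by (simp add: TT_v JJ_v mv_neg_right)

lemma mv_add_scale: "A *v (x + t *\<^sub>R v) = A *v x + t *\<^sub>R (A *v (v::real^'n))"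
  by (simp add: matrix_vector_right_distrib matrix_vector_mult_scaleR)

lemma quad_exp:
  assumes "transpose A = A"
  shows "(x + t *\<^sub>R v) \<bullet> (A *v (x + t *\<^sub>R v)) = x \<bullet> (A *v x) + 2 * t * (x \<bullet> (A *v v)) + t^2 * (v \<bullet> (A *v (v::real^'n)))"
proof -
  have "(x + t *\<^sub>R v) \<bullet> (A *v (x + t *\<^sub>R v)) = (x + t *\<^sub>R v) \<bullet> (A *v x + t *\<^sub>R (A *v v))"
    by (simp only: mv_add_scale)
  also have "\<dots> = x \<bullet> (A *v x) + t * (x \<bullet> (A *v v)) + t * (v \<bullet> (A *v x)) + t * t * (v \<bullet> (A *v v))"
    by (simp only: inner_add_left inner_add_right inner_scaleR_left inner_scaleR_right) (simp add: algebra_simps)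
  also have "v \<bullet> (A *v x) = x \<bullet> (A *v v)" using sym_inner[OF assms] by metis
  finally show ?thesis by (simp add: power2_eq_square algebra_simps)
qed

lemma quad_zero:
  fixes b c :: real
  assumes "\<And>t. 0 \<le> 2 * t * b + t^2 * c"
  shows "b = 0"
proof -
  define s where "s = 1 / (\<bar>c\<bar> + 1)"
  have s: "s > 0" "s * c \<le> 1" unfolding s_def by (auto simp: field_simps)
  have "0 \<le> 2 * (- s * b) * b + (- s * b)^2 * c" by (rule assms)
  hence "0 \<le> s * b^2 * (s * c - 2)" by (simp add: power2_eq_square algebra_simps)
  moreover have "s * c - 2 < 0" using s by simp
  ultimately have "s * b^2 \<le> 0" by (auto simp: zero_le_mult_iff)
  hence "b^2 \<le> 0" using s by (simp add: zero_le_mult_iff mult_le_0_iff)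
  thus "b = 0" by simp
qed

lemma core:
  fixes A :: "('n::finite) mat2n"
  assumes sym: "transpose A = A"
    and W: "subspace W" "W \<noteq> {0}"
    and inv: "\<And>x. x \<in> W \<Longrightarrow> TT A *v x \<in> W"
    and pd: "\<And>x. x \<in> W \<Longrightarrow> x \<noteq> 0 \<Longrightarrow> 0 < x \<bullet> (A *v x)"
  shows "\<exists>e f d. e \<in> W \<and> f \<in> W \<and> d > 0 \<and> TT A *v e = d *\<^sub>R f \<and> TT A *v f = - d *\<^sub>R e \<and> om e f = 1"
proof -
  let ?T = "\<lambda>x. TT A *v x"
  define a where "a x = x \<bullet> (A *v x)" for x
  define q where "q x = ?T x \<bullet> (A *v ?T x)" for x
  define R where "R x = q x / a x" for x
  define S where "S = W \<inter> sphere 0 1"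
  have cS: "compact S" unfolding S_def
    using closed_Int_compact[OF closed_subspace[OF W(1)] compact_sphere[of 0 1]] by simp
  obtain y where y: "y \<in> W" "y \<noteq> 0" using W subspace_0[OF W(1)] by auto
  have "y /\<^sub>R norm y \<in> S" using y W(1) by (simp add: S_def subspace_scale)
  hence neS: "S \<noteq> {}" by auto
  have aS: "a x > 0" if "x \<in> S" for x using that pd unfolding S_def a_def by fastforce
  have cT: "continuous_on S (\<lambda>x. A *v (TT A *v x))" unfolding matrix_vector_mul_assoc
    by (intro continuous_intros)
  have "continuous_on S R" unfolding R_def q_def a_def
    by (intro continuous_intros cT) (use aS in \<open>force simp: a_def\<close>)
  then obtain x0 where x0: "x0 \<in> S" "\<And>x. x \<in> S \<Longrightarrow> R x \<le> R x0"
    using continuous_attains_sup[OF cS neS] by blast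
  define \<mu> where "\<mu> = R x0"
  have x0W: "x0 \<in> W" and x0n: "norm x0 = 1" using x0 by (auto simp: S_def)
  have x0nz: "x0 \<noteq> 0" using x0n by auto
  have ax0: "a x0 > 0" using aS x0 by auto
  have qx0: "q x0 = \<mu> * a x0" using ax0 by (simp add: \<mu>_def R_def)
  have a_scale: "a (c *\<^sub>R x) = c^2 * a x" for c x
    by (simp add: a_def matrix_vector_mult_scaleR power2_eq_square)
  have q_scale: "q (c *\<^sub>R x) = c^2 * q x" for c x
    by (simp add: q_def matrix_vector_mult_scaleR power2_eq_square)
  have bound: "q x \<le> \<mu> * a x" if "x \<in> W" for x
  proof (cases "x = 0")
    case True then show ?thesis by (simp add: q_def a_def)
  next
    case False
    let ?c = "1 / norm x"
    have "?c *\<^sub>R x \<in> S" using that False W(1) by (simp add: S_def subspace_scale)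
    hence "R (?c *\<^sub>R x) \<le> \<mu>" using x0 \<mu>_def by auto
    moreover have "R (?c *\<^sub>R x) = R x" using False
      by (simp add: R_def a_scale q_scale)
    ultimately have "R x \<le> \<mu>" by simp
    moreover have "a x > 0" using pd that False a_def by auto
    ultimately show ?thesis unfolding R_def by (simp add: pos_divide_le_eq mult.commute)
  qed
  have a_exp: "a (x + t *\<^sub>R v) = a x + 2 * t * (x \<bullet> (A *v v)) + t^2 * a v" for x v t
    unfolding a_def by (rule quad_exp[OF sym])
  have q_exp: "q (x + t *\<^sub>R v) = q x + 2 * t * (?T x \<bullet> (A *v ?T v)) + t^2 * q v" for x v t
  proof -
    have "q (x + t *\<^sub>R v) = (?T x + t *\<^sub>R ?T v) \<bullet> (A *v (?T x + t *\<^sub>R ?T v))"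
      by (simp only: q_def mv_add_scale[of "TT A"])
    also have "\<dots> = q x + 2 * t * (?T x \<bullet> (A *v ?T v)) + t^2 * q v"
      unfolding q_def by (rule quad_exp[OF sym])
    finally show ?thesis .
  qed
  have beta0: "\<mu> * (x0 \<bullet> (A *v v)) - ?T x0 \<bullet> (A *v ?T v) = 0" if v: "v \<in> W" for v
  proof (rule quad_zero)
    fix t :: real
    have "x0 + t *\<^sub>R v \<in> W" using x0W v W(1) by (simp add: subspace_add subspace_scale)
    hence "q (x0 + t *\<^sub>R v) \<le> \<mu> * a (x0 + t *\<^sub>R v)" by (rule bound)
    moreover have "q v \<le> \<mu> * a v" using bound v by auto
    ultimately show "0 \<le> 2 * t * (\<mu> * (x0 \<bullet> (A *v v)) - ?T x0 \<bullet> (A *v ?T v)) + t^2 * (\<mu> * a v - q v)"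
      unfolding a_exp q_exp using qx0 by (simp add: algebra_simps)
  qed
  define z where "z = \<mu> *\<^sub>R x0 + ?T (?T x0)"
  have zW: "z \<in> W" unfolding z_def using x0W inv W(1) by (simp add: subspace_add subspace_scale)
  have "z \<bullet> (A *v v) = 0" if "v \<in> W" for v
  proof -
    have "?T (?T x0) \<bullet> (A *v v) = - (?T x0 \<bullet> (A *v ?T v))" by (rule skewT[OF sym])
    thus ?thesis using beta0[OF that] by (simp add: z_def inner_add_left algebra_simps)
  qed
  hence "z \<bullet> (A *v z) = 0" using zW by blast
  hence "z = 0" using pd[OF zW] by fastforce
  hence TTx0: "?T (?T x0) = - \<mu> *\<^sub>R x0" unfolding z_def by (simp add: add_eq_0_iff)
  have Tx0nz: "?T x0 \<noteq> 0"
  proof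
    assume "?T x0 = 0"
    hence "A *v x0 = 0" by (metis TT_A matrix_vector_mult_0_right)
    thus False using ax0 by (simp add: a_def)
  qed
  have mupos: "\<mu> > 0"
  proof -
    have "q x0 > 0" using pd[OF inv[OF x0W] Tx0nz] by (simp add: q_def)
    thus ?thesis using qx0 ax0 by (simp add: zero_less_mult_iff)
  qed
  define d where "d = sqrt \<mu>"
  have dpos: "d > 0" and dd: "d * d = \<mu>" using mupos by (auto simp: d_def)
  define f' where "f' = (1/d) *\<^sub>R ?T x0"
  have omx0: "om x0 f' = a x0 / d"
  proof -
    have "om x0 (?T x0) = a x0"
      by (simp add: om_def a_def TT_v JJ_v mv_neg_right)
    thus ?thesis by (simp add: f'_def om_def matrix_vector_mult_scaleR)
  qed
  have ompos: "om x0 f' > 0" using omx0 ax0 dpos by simp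
  define c where "c = 1 / sqrt (om x0 f')"
  define e where "e = c *\<^sub>R x0"
  define f where "f = c *\<^sub>R f'"
  have "e \<in> W" using x0W W(1) by (simp add: e_def subspace_scale)
  moreover have "f \<in> W" using inv[OF x0W] W(1) by (simp add: f_def f'_def subspace_scale)
  moreover have "?T e = d *\<^sub>R f"
    using dpos by (simp add: e_def f_def f'_def matrix_vector_mult_scaleR)
  moreover have "?T f = - d *\<^sub>R e"
    using dpos dd by (simp add: e_def f_def f'_def matrix_vector_mult_scaleR TTx0 field_simps)
  moreover have "om e f = 1"
  proof -
    have "om e f = c * c * om x0 f'" by (simp add: e_def f_def om_def matrix_vector_mult_scaleR)
    also have "\<dots> = 1" using ompos by (simp add: c_def)
    finally show ?thesis .
  qed
  ultimately show ?thesis using dpos by blast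
qed



lemma om_add_left: "om (x + y) z = om x z + om y z" by (simp add: om_def inner_add_left)
lemma om_scale_left: "om (c *\<^sub>R x) z = c * om x z" by (simp add: om_def)
lemma om_add_right: "om z (x + y) = om z x + om z y" by (simp add: om_def matrix_vector_right_distrib inner_add_right)
lemma om_scale_right: "om z (c *\<^sub>R x) = c * om z x" by (simp add: om_def matrix_vector_mult_scaleR)
lemma om_diff_left: "om (x - y) z = om x z - om y z" by (simp add: om_def inner_diff_left)
lemma om_diff_right: "om z (x - y) = om z x - om z y"
  by (simp add: om_def matrix_vector_mult_diff_distrib inner_diff_right)
lemma om_zero_left [simp]: "om 0 z = 0" by (simp add: om_def)
lemma om_zero_right [simp]: "om z 0 = 0" by (simp add: om_def)

lemma psd_zero:
  fixes A :: "real^'n^'n"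
  assumes sym: "transpose A = A" and psd: "\<And>x. 0 \<le> x \<bullet> (A *v x)" and z: "x \<bullet> (A *v x) = 0"
  shows "A *v x = 0"
proof -
  have "x \<bullet> (A *v v) = 0" for v
  proof (rule quad_zero[where c = "v \<bullet> (A *v v)"])
    fix t :: real
    have "0 \<le> (x + t *\<^sub>R v) \<bullet> (A *v (x + t *\<^sub>R v))" by (rule psd)
    also have "\<dots> = 2 * t * (x \<bullet> (A *v v)) + t^2 * (v \<bullet> (A *v v))"
      using quad_exp[OF sym] z by simp
    finally show "0 \<le> 2 * t * (x \<bullet> (A *v v)) + t^2 * (v \<bullet> (A *v v))" .
  qed
  hence "x \<bullet> (A *v (A *v x)) = 0" by blast
  hence "(A *v x) \<bullet> (A *v x) = 0" using sym_inner'[OF sym] by metis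
  thus ?thesis by simp
qed

definition good :: "('n::finite) mat2n \<Rightarrow> (real^('n+'n)) set \<Rightarrow> bool" where
  "good A W \<longleftrightarrow> subspace W \<and> (\<forall>x\<in>W. TT A *v x \<in> W) \<and>
     (\<forall>x\<in>W. A *v x = 0 \<longrightarrow> x \<noteq> 0 \<longrightarrow> (\<exists>y\<in>W. A *v y = 0 \<and> om x y \<noteq> 0))"

lemma step:
  fixes A :: "('n::finite) mat2n"
  assumes sym: "transpose A = A" and psd: "\<And>x. 0 \<le> x \<bullet> (A *v x)"
    and g: "good A W" and nz: "W \<noteq> {0}"
  shows "\<exists>e f d. e \<in> W \<and> f \<in> W \<and> d \<ge> 0 \<and> TT A *v e = d *\<^sub>R f \<and> TT A *v f = - d *\<^sub>R e \<and> om e f = 1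
     \<and> ((A *v e = 0 \<and> A *v f = 0) \<or> (\<forall>x\<in>W. A *v x = 0 \<longrightarrow> x = 0))"
proof (cases "\<exists>x\<in>W. A *v x = 0 \<and> x \<noteq> 0")
  case True
  then obtain x where x: "x \<in> W" "A *v x = 0" "x \<noteq> 0" by blast
  then obtain y where y: "y \<in> W" "A *v y = 0" "om x y \<noteq> 0" using g unfolding good_def by blast
  define f where "f = (1 / om x y) *\<^sub>R y"
  have "f \<in> W" using y g by (simp add: f_def good_def subspace_scale)
  moreover have "A *v f = 0" using y by (simp add: f_def matrix_vector_mult_scaleR)
  moreover have "om x f = 1" using y by (simp add: f_def om_scale_right)
  moreover have "TT A *v x = 0" using x by (simp add: TT_v)
  moreover have "TT A *v f = 0" using \<open>A *v f = 0\<close> by (simp add: TT_v)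
  ultimately show ?thesis using x by (intro exI[of _ x] exI[of _ f] exI[of _ 0]) auto
next
  case False
  have W: "subspace W" "\<And>x. x \<in> W \<Longrightarrow> TT A *v x \<in> W" using g by (auto simp: good_def)
  have pd: "0 < x \<bullet> (A *v x)" if "x \<in> W" "x \<noteq> 0" for x
  proof -
    have "x \<bullet> (A *v x) \<noteq> 0" using psd_zero[OF sym psd] False that by blast
    thus ?thesis using psd[of x] by simp
  qed
  obtain e f d where "e \<in> W \<and> f \<in> W \<and> d > 0 \<and> TT A *v e = d *\<^sub>R f \<and> TT A *v f = - d *\<^sub>R e \<and> om e f = 1"
    using core[OF sym W(1) nz W(2) pd] by blast
  thus ?thesis using False by (intro exI[of _ e] exI[of _ f] exI[of _ d]) auto
qed

lemma om_T_left:
  assumes sym: "transpose A = A"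
  shows "om (TT A *v x) z = - (x \<bullet> (A *v z))"
proof -
  have "om (TT A *v x) z = - ((Jmat *v (A *v x)) \<bullet> (Jmat *v z))" by (simp add: om_def TT_v)
  also have "\<dots> = - ((A *v x) \<bullet> z)" by (simp add: inner_J_J)
  also have "\<dots> = - (x \<bullet> (A *v z))" using sym_inner'[OF sym] by metis
  finally show ?thesis .
qed

lemma A_via_om:
  assumes "TT A *v e = d *\<^sub>R f"
  shows "x \<bullet> (A *v e) = d * om x f"
proof -
  have "A *v e = Jmat *v (TT A *v e)" by (rule TT_A)
  thus ?thesis using assms by (simp add: om_def matrix_vector_mult_scaleR)
qed

lemma dim_compl:
  fixes W :: "(real^('n::finite+'n)) set"
  assumes W: "subspace W" and e: "e \<in> W" and f: "f \<in> W" and ef: "om e f = 1"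
  shows "dim {x\<in>W. om x e = 0 \<and> om x f = 0} + 2 = dim W"
proof -
  define W' where "W' = {x\<in>W. om x e = 0 \<and> om x f = 0}"
  have fe: "om f e = -1" using ef om_anti[of f e] by simp
  have sW': "subspace W'" unfolding W'_def subspace_def
    using W by (auto simp: subspace_def om_add_left om_scale_left)
  have sp: "span {e, f} = {a *\<^sub>R e + b *\<^sub>R f | a b. True}"
  proof (intro set_eqI iffI)
    fix z assume "z \<in> span {e, f}"
    then obtain k where "z - k *\<^sub>R e \<in> span {f}" by (auto simp: span_insert)
    then obtain c where "z - k *\<^sub>R e = c *\<^sub>R f" by (auto simp: span_singleton)
    hence "z = k *\<^sub>R e + c *\<^sub>R f" by (simp add: algebra_simps)
    thus "z \<in> {a *\<^sub>R e + b *\<^sub>R f | a b. True}" by blast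
  next
    fix z assume "z \<in> {a *\<^sub>R e + b *\<^sub>R f | a b. True}"
    then obtain a b where "z = a *\<^sub>R e + b *\<^sub>R f" by blast
    thus "z \<in> span {e, f}" by (simp add: span_add span_scale span_base)
  qed
  have sum: "{x + y |x y. x \<in> W' \<and> y \<in> span {e, f}} = W"
  proof (intro set_eqI iffI)
    fix z assume "z \<in> {x + y |x y. x \<in> W' \<and> y \<in> span {e, f}}"
    then obtain x y where "z = x + y" "x \<in> W'" "y \<in> span {e,f}" by blast
    moreover have "span {e,f} \<subseteq> W" using W e f by (simp add: span_minimal)
    ultimately show "z \<in> W" using W by (auto simp: W'_def subspace_add)
  next
    fix z assume z: "z \<in> W"
    define y where "y = om z f *\<^sub>R e - om z e *\<^sub>R f"
    have "z - y \<in> W'" unfolding W'_def using z W e f fe ef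
      by (auto simp: y_def om_diff_left om_add_left om_scale_left om_self subspace_diff subspace_scale)
    moreover have "y \<in> span {e,f}" unfolding sp y_def
      by (rule CollectI, rule exI[of _ "om z f"], rule exI[of _ "- om z e"]) simp
    ultimately show "z \<in> {x + y |x y. x \<in> W' \<and> y \<in> span {e, f}}"
      by (intro CollectI exI[of _ "z - y"] exI[of _ y]) simp
  qed
  have int: "W' \<inter> span {e,f} \<subseteq> {0}"
  proof
    fix z assume "z \<in> W' \<inter> span {e,f}"
    then obtain a b where z: "z = a *\<^sub>R e + b *\<^sub>R f" "om z e = 0" "om z f = 0"
      unfolding sp W'_def by blast
    have "om z e = - b" using z(1) fe by (simp add: om_add_left om_scale_left om_self)
    moreover have "om z f = a" using z(1) ef by (simp add: om_add_left om_scale_left om_self)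
    ultimately show "z \<in> {0}" using z by simp
  qed
  have fnz: "f \<noteq> 0" using ef by auto
  have "e \<notin> span {f}"
  proof
    assume "e \<in> span {f}"
    then obtain k where "e = k *\<^sub>R f" by (auto simp: span_singleton)
    thus False using ef by (simp add: om_scale_left om_self)
  qed
  hence d2: "dim (span {e,f}) = 2"
    using fnz by (simp add: dim_insert)
  have "dim {x + y |x y. x \<in> W' \<and> y \<in> span {e, f}} + dim (W' \<inter> span {e,f}) = dim W' + dim (span {e,f})"
    by (rule dim_sums_Int[OF sW' subspace_span])
  moreover have "dim (W' \<inter> span {e,f}) = 0" using int by simp
  ultimately have "dim W' + 2 = dim W" using sum d2 by simp
  thus ?thesis by (simp add: W'_def)
qed



lemma good_compl:
  fixes A :: "('n::finite) mat2n"
  assumes sym: "transpose A = A" and g: "good A W"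
    and e: "e \<in> W" and f: "f \<in> W" and Te: "TT A *v e = d *\<^sub>R f" and Tf: "TT A *v f = - d *\<^sub>R e"
    and ef: "om e f = 1"
    and alt: "(A *v e = 0 \<and> A *v f = 0) \<or> (\<forall>x\<in>W. A *v x = 0 \<longrightarrow> x = 0)"
  shows "good A {x\<in>W. om x e = 0 \<and> om x f = 0}"
proof -
  define W' where "W' = {x\<in>W. om x e = 0 \<and> om x f = 0}"
  have W: "subspace W" "\<And>x. x \<in> W \<Longrightarrow> TT A *v x \<in> W"
    "\<And>x. x \<in> W \<Longrightarrow> A *v x = 0 \<Longrightarrow> x \<noteq> 0 \<Longrightarrow> \<exists>y\<in>W. A *v y = 0 \<and> om x y \<noteq> 0"
    using g by (auto simp: good_def)
  have fe: "om f e = -1" using ef om_anti[of f e] by simp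
  have sW': "subspace W'" unfolding W'_def subspace_def
    using W(1) by (auto simp: subspace_def om_add_left om_scale_left)
  have inv: "TT A *v x \<in> W'" if x: "x \<in> W'" for x
  proof -
    have "om (TT A *v x) e = - (d * om x f)" using om_T_left[OF sym] A_via_om[OF Te] by simp
    moreover have "om (TT A *v x) f = - ((- d) * om x e)" using om_T_left[OF sym] A_via_om[of A f "- d" e] Tf by simp
    ultimately show ?thesis using x W(2) by (simp add: W'_def)
  qed
  have ker: "\<exists>y\<in>W'. A *v y = 0 \<and> om x y \<noteq> 0" if x: "x \<in> W'" "A *v x = 0" "x \<noteq> 0" for x
  proof -
    from alt show ?thesis
    proof
      assume ker: "A *v e = 0 \<and> A *v f = 0"
      obtain y where y: "y \<in> W" "A *v y = 0" "om x y \<noteq> 0" using W(3) x by (auto simp: W'_def)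
      define y' where "y' = y - om y f *\<^sub>R e + om y e *\<^sub>R f"
      have "y' \<in> W" using y e f W(1) by (simp add: y'_def subspace_add subspace_diff subspace_scale)
      moreover have "om y' e = 0" using fe
        by (simp add: y'_def om_add_left om_diff_left om_scale_left om_self)
      moreover have "om y' f = 0" using ef
        by (simp add: y'_def om_add_left om_diff_left om_scale_left om_self)
      moreover have "A *v y' = 0" using y ker
        by (simp add: y'_def matrix_vector_right_distrib matrix_vector_mult_diff_distrib matrix_vector_mult_scaleR)
      moreover have "om x y' = om x y" using x
        by (simp add: y'_def W'_def om_add_right om_diff_right om_scale_right)
      ultimately show ?thesis using y by (auto simp: W'_def)
    next
      assume "\<forall>x\<in>W. A *v x = 0 \<longrightarrow> x = 0"
      thus ?thesis using x by (auto simp: W'_def)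
    qed
  qed
  show ?thesis using sW' inv ker unfolding good_def W'_def[symmetric] by blast
qed

lemma build:
  fixes A :: "('n::finite) mat2n" and I :: "'n set"
  assumes sym: "transpose A = A" and psd: "\<And>x. 0 \<le> x \<bullet> (A *v x)" and fin: "finite I"
  shows "\<forall>W. good A W \<longrightarrow> dim W = 2 * card I \<longrightarrow>
    (\<exists>e f d. (\<forall>i\<in>I. e i \<in> W \<and> f i \<in> W \<and> 0 \<le> d i \<and> TT A *v e i = d i *\<^sub>R f i \<and> TT A *v f i = - d i *\<^sub>R e i) \<and>
      (\<forall>i\<in>I. \<forall>j\<in>I. om (e i) (f j) = (if i = j then 1 else 0) \<and> om (e i) (e j) = 0 \<and> om (f i) (f j) = 0))"
  using fin
proof (induction I rule: finite_induct)
  case empty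
  then show ?case by auto
next
  case (insert i I)
  show ?case
  proof (intro allI impI)
    fix W assume g: "good A W" and dW: "dim W = 2 * card (insert i I)"
    have dW2: "dim W = 2 * card I + 2" using dW insert by simp
    have nz: "W \<noteq> {0}"
    proof
      assume "W = {0}" hence "dim W = 0" by simp
      thus False using dW2 by simp
    qed
    obtain e0 f0 d0 where ef0: "e0 \<in> W" "f0 \<in> W" "d0 \<ge> 0" "TT A *v e0 = d0 *\<^sub>R f0" "TT A *v f0 = - d0 *\<^sub>R e0" "om e0 f0 = 1"
      "(A *v e0 = 0 \<and> A *v f0 = 0) \<or> (\<forall>x\<in>W. A *v x = 0 \<longrightarrow> x = 0)"
      using step[OF sym psd g nz] by blast
    define W' where "W' = {x\<in>W. om x e0 = 0 \<and> om x f0 = 0}"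
    have g': "good A W'" unfolding W'_def using good_compl[OF sym g ef0(1,2,4,5,6,7)] .
    have sW: "subspace W" using g by (simp add: good_def)
    have "dim W' + 2 = dim W" unfolding W'_def by (rule dim_compl[OF sW ef0(1,2,6)])
    hence dW': "dim W' = 2 * card I" using dW2 by simp
    obtain e f d where IH: "\<forall>i\<in>I. e i \<in> W' \<and> f i \<in> W' \<and> 0 \<le> d i \<and> TT A *v e i = d i *\<^sub>R f i \<and> TT A *v f i = - d i *\<^sub>R e i"
      "\<forall>i\<in>I. \<forall>j\<in>I. om (e i) (f j) = (if i = j then 1 else 0) \<and> om (e i) (e j) = 0 \<and> om (f i) (f j) = 0"
      using insert.IH g' dW' by blast
    define e' where "e' = e(i := e0)"
    define f' where "f' = f(i := f0)"
    define d' where "d' = d(i := d0)"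
    have W'W: "W' \<subseteq> W" by (auto simp: W'_def)
    have orth: "om (e j) e0 = 0 \<and> om (e j) f0 = 0 \<and> om (f j) e0 = 0 \<and> om (f j) f0 = 0" if "j \<in> I" for j
      using IH(1) that by (auto simp: W'_def)
    have A1: "\<forall>j\<in>insert i I. e' j \<in> W \<and> f' j \<in> W \<and> 0 \<le> d' j \<and> TT A *v e' j = d' j *\<^sub>R f' j \<and> TT A *v f' j = - d' j *\<^sub>R e' j"
      using IH(1) ef0 W'W insert.hyps(2) by (auto simp: e'_def f'_def d'_def)
    have A2: "om (e' a) (f' b) = (if a = b then 1 else 0) \<and> om (e' a) (e' b) = 0 \<and> om (f' a) (f' b) = 0"
      if ab: "a \<in> insert i I" "b \<in> insert i I" for a b
    proof (cases "a = i"; cases "b = i")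
      assume "a = i" "b = i" thus ?thesis using ef0(6) by (simp add: e'_def f'_def om_self)
    next
      assume "a = i" "b \<noteq> i"
      hence "b \<in> I" using ab by simp
      thus ?thesis using orth[of b] \<open>a = i\<close> \<open>b \<noteq> i\<close> om_anti[of e0 "f b"] om_anti[of e0 "e b"] om_anti[of f0 "f b"]
        by (simp add: e'_def f'_def)
    next
      assume "a \<noteq> i" "b = i"
      hence "a \<in> I" using ab by simp
      thus ?thesis using orth[of a] \<open>a \<noteq> i\<close> \<open>b = i\<close> by (simp add: e'_def f'_def)
    next
      assume "a \<noteq> i" "b \<noteq> i"
      hence "a \<in> I" "b \<in> I" using ab by auto
      thus ?thesis using IH(2) \<open>a \<noteq> i\<close> \<open>b \<noteq> i\<close> by (simp add: e'_def f'_def)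
    qed
    show "\<exists>e f d. (\<forall>i\<in>insert i I. e i \<in> W \<and> f i \<in> W \<and> 0 \<le> d i \<and> TT A *v e i = d i *\<^sub>R f i \<and> TT A *v f i = - d i *\<^sub>R e i) \<and>
      (\<forall>ia\<in>insert i I. \<forall>j\<in>insert i I. om (e ia) (f j) = (if ia = j then 1 else 0) \<and> om (e ia) (e j) = 0 \<and> om (f ia) (f j) = 0)"
      using A1 A2 by blast
  qed
qed



definition colmat :: "('n::finite \<Rightarrow> real^('n+'n)) \<Rightarrow> ('n \<Rightarrow> real^('n+'n)) \<Rightarrow> 'n mat2n" where
  "colmat e f = (\<chi> r c. case c of Inl i \<Rightarrow> e i $ r | Inr i \<Rightarrow> f i $ r)"

lemma column_colmat [simp]: "column (Inl i) (colmat e f) = e i" "column (Inr i) (colmat e f) = f i"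
  by (simp_all add: colmat_def column_def vec_eq_iff)

lemma Jmat_entries [simp]:
  "Jmat $ Inl a $ Inl b = 0" "Jmat $ Inr a $ Inr b = 0"
  "Jmat $ Inl a $ Inr b = (if a = b then 1 else 0)" "Jmat $ Inr a $ Inl b = (if a = b then -1 else 0)"
  by (simp_all add: Jmat_def)

lemma diag2_entries [simp]:
  "diag2 d $ Inl a $ Inl b = (if a = b then d a else 0)" "diag2 d $ Inr a $ Inr b = (if a = b then d a else 0)"
  "diag2 d $ Inl a $ Inr b = 0" "diag2 d $ Inr a $ Inl b = 0"
  by (simp_all add: diag2_def)

lemma mat2n_eqI:
  fixes X Y :: "('n::finite) mat2n"
  assumes "\<And>a b. X $ Inl a $ Inl b = Y $ Inl a $ Inl b" "\<And>a b. X $ Inl a $ Inr b = Y $ Inl a $ Inr b"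
    "\<And>a b. X $ Inr a $ Inl b = Y $ Inr a $ Inl b" "\<And>a b. X $ Inr a $ Inr b = Y $ Inr a $ Inr b"
  shows "X = Y"
  using assms by (simp add: vec_eq_Plus)

lemma dim_UNIV_2n: "dim (UNIV :: (real^('n::finite+'n)) set) = 2 * CARD('n)"
proof -
  have "CARD('n + 'n) = CARD('n) + CARD('n)"
    using card_Plus[of "UNIV::'n set" "UNIV::'n set"] by simp
  thus ?thesis by simp
qed

lemma williamson_unsorted:
  fixes A :: "('n::finite) mat2n"
  assumes psd: "psd_sym A" and ker: "symplectic_subspace (kernel A)"
  shows "\<exists>M d. symplectic M \<and> (\<forall>i. 0 \<le> d i) \<and> transpose M ** A ** M = diag2 d"
proof -
  have sym: "transpose A = A" and ps: "\<And>x. 0 \<le> x \<bullet> (A *v x)" using psd by (auto simp: psd_sym_def)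
  have g: "good A UNIV"
    using ker unfolding good_def symplectic_subspace_def kernel_def om_def by auto
  obtain e f :: "'n \<Rightarrow> real^('n+'n)" and d :: "'n \<Rightarrow> real" where
    B1: "\<forall>i\<in>UNIV. e i \<in> UNIV \<and> f i \<in> UNIV \<and> 0 \<le> d i \<and> TT A *v e i = d i *\<^sub>R f i \<and> TT A *v f i = - d i *\<^sub>R e i" and
    B2: "\<forall>i\<in>UNIV. \<forall>j\<in>UNIV. om (e i) (f j) = (if i = j then 1 else 0) \<and> om (e i) (e j) = 0 \<and> om (f i) (f j) = 0"
    using build[OF sym ps finite[of "UNIV::'n set"], rule_format, OF g dim_UNIV_2n] by blast
  have ff: "om (f i) (e j) = (if i = j then -1 else 0)" for i j
    using B2 om_anti[of "f i" "e j"] by auto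
  define M where "M = colmat e f"
  have E: "(transpose M ** X ** M) $ Inl a $ Inl b = e a \<bullet> (X *v e b)"
    "(transpose M ** X ** M) $ Inl a $ Inr b = e a \<bullet> (X *v f b)"
    "(transpose M ** X ** M) $ Inr a $ Inl b = f a \<bullet> (X *v e b)"
    "(transpose M ** X ** M) $ Inr a $ Inr b = f a \<bullet> (X *v f b)" for X a b
    by (simp_all only: tmm_entry M_def column_colmat)
  have oo: "om (e a) (f b) = (if a = b then 1 else 0)" "om (e a) (e b) = 0" "om (f a) (f b) = 0" for a b
    using B2 by auto
  have "symplectic M" unfolding symplectic_def
    by (rule mat2n_eqI) (simp_all only: E Jmat_entries flip: om_def, simp_all add: oo ff)
  moreover have "transpose M ** A ** M = diag2 d"
  proof (rule mat2n_eqI)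
    fix a b
    have T1: "TT A *v e b = d b *\<^sub>R f b" and T2: "TT A *v f b = (- d b) *\<^sub>R e b" using B1 by auto
    show "(transpose M ** A ** M) $ Inl a $ Inl b = diag2 d $ Inl a $ Inl b"
      unfolding E A_via_om[OF T1] by (simp add: oo)
    show "(transpose M ** A ** M) $ Inl a $ Inr b = diag2 d $ Inl a $ Inr b"
      unfolding E A_via_om[OF T2] by (simp add: oo)
    show "(transpose M ** A ** M) $ Inr a $ Inl b = diag2 d $ Inr a $ Inl b"
      unfolding E A_via_om[OF T1] by (simp add: oo)
    show "(transpose M ** A ** M) $ Inr a $ Inr b = diag2 d $ Inr a $ Inr b"
      unfolding E A_via_om[OF T2] by (simp add: ff)
  qed
  ultimately show ?thesis using B1 by blast
qed

definition liftp :: "('n \<Rightarrow> 'n) \<Rightarrow> 'n + 'n \<Rightarrow> 'n + 'n" where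
  "liftp p = map_sum p p"

lemma liftp_simps [simp]: "liftp p (Inl a) = Inl (p a)" "liftp p (Inr a) = Inr (p a)"
  by (simp_all add: liftp_def)

definition Pm :: "('n::finite \<Rightarrow> 'n) \<Rightarrow> 'n mat2n" where
  "Pm p = (\<chi> r c. if r = liftp p c then 1 else 0)"

lemma column_Pm: "column c (Pm p) = axis (liftp p c) 1"
  by (simp add: Pm_def column_def axis_def vec_eq_iff)

lemma mv_axis: "(X *v axis k 1) $ r = X $ r $ (k::'a::finite)" for X :: "real^'a^'b::finite"
proof -
  have "(X *v axis k 1) $ r = (\<Sum>j\<in>UNIV. X $ r $ j * (if j = k then 1 else 0))"
    by (simp add: matrix_vector_mult_def axis_def)
  also have "\<dots> = (\<Sum>j\<in>UNIV. if j = k then X $ r $ k else 0)" by (rule sum.cong) auto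
  also have "\<dots> = X $ r $ k" by simp
  finally show ?thesis .
qed

lemma Pm_tmm: "(transpose (Pm p) ** X ** Pm p) $ a $ b = X $ liftp p a $ liftp p b"
  by (simp add: tmm_entry column_Pm inner_axis' mv_axis)

lemma Pm_symplectic: "inj p \<Longrightarrow> symplectic (Pm p)"
  unfolding symplectic_def by (rule mat2n_eqI) (auto simp: Pm_tmm inj_eq)

lemma Pm_diag2: "inj p \<Longrightarrow> transpose (Pm p) ** diag2 d ** Pm p = diag2 (\<lambda>i. d (p i))"
  by (rule mat2n_eqI) (auto simp: Pm_tmm inj_eq)

lemma symplectic_mult: "symplectic M \<Longrightarrow> symplectic N \<Longrightarrow> symplectic (M ** N)"
  unfolding symplectic_def by (simp add: matrix_transpose_mul matrix_mul_assoc)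
    (metis matrix_mul_assoc)

lemma sort_perm:
  fixes d :: "'n::{finite,linorder} \<Rightarrow> real"
  shows "\<exists>s. s permutes UNIV \<and> mono (\<lambda>i. d (s i))"
proof -
  define ys where "ys = sort_key d (sorted_list_of_set (UNIV::'n set))"
  have ys: "distinct ys" "set ys = UNIV" "sorted (map d ys)" by (simp_all add: ys_def)
  have len: "length ys = CARD('n)" using distinct_card[OF ys(1)] ys(2) by simp
  define r where "r i = card {j. j < i}" for i :: 'n
  have rlt: "r i < CARD('n)" for i
    unfolding r_def by (rule psubset_card_mono) auto
  have rmono: "r i < r i'" if "i < i'" for i i'
    unfolding r_def by (rule psubset_card_mono) (use that in auto)
  have rmono': "r i \<le> r i'" if "i \<le> i'" for i i'
    using rmono that by (cases "i = i'") (auto simp: order.order_iff_strict)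
  have rinj: "inj r"
    by (rule injI) (metis linorder_neqE rmono less_irrefl)
  define s where "s i = ys ! r i" for i
  have "inj s"
  proof (rule injI)
    fix i i' assume "s i = s i'"
    hence "r i = r i'" using ys(1) rlt len by (simp add: s_def nth_eq_iff_index_eq)
    thus "i = i'" using rinj by (simp add: inj_eq)
  qed
  hence "bij s" using finite_UNIV_inj_surj[of s] by (simp add: bij_def)
  hence "s permutes UNIV" by (intro bij_imp_permutes) auto
  moreover have "mono (\<lambda>i. d (s i))"
  proof (rule monoI)
    fix i i' :: 'n assume "i \<le> i'"
    hence "(map d ys) ! r i \<le> (map d ys) ! r i'"
      using sorted_nth_mono[OF ys(3), of "r i" "r i'"] rmono' rlt len by simp
    thus "d (s i) \<le> d (s i')" using rlt len by (simp add: s_def)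
  qed
  ultimately show ?thesis by blast
qed

lemma williamson:
  fixes A :: "('n::{finite,linorder}) mat2n"
  assumes psd: "psd_sym A" and ker: "symplectic_subspace (kernel A)"
  shows "\<exists>M d. M \<in> Sp \<and> mono d \<and> (\<forall>i. 0 \<le> d i) \<and> transpose M ** A ** M = diag2 d"
proof -
  obtain M d where M: "symplectic M" "\<forall>i. 0 \<le> d i" "transpose M ** A ** M = diag2 d"
    using williamson_unsorted[OF psd ker] by blast
  obtain s where s: "s permutes UNIV" "mono (\<lambda>i. d (s i))" using sort_perm by blast
  have injs: "inj s" using s(1) permutes_inj by blast
  have "symplectic (M ** Pm s)" using M(1) Pm_symplectic[OF injs] by (rule symplectic_mult)
  moreover have "transpose (M ** Pm s) ** A ** (M ** Pm s) = diag2 (\<lambda>i. d (s i))"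
  proof -
    have "transpose (M ** Pm s) ** A ** (M ** Pm s) = transpose (Pm s) ** (transpose M ** A ** M) ** Pm s"
      by (simp add: matrix_transpose_mul matrix_mul_assoc)
    also have "\<dots> = diag2 (\<lambda>i. d (s i))" using M(3) Pm_diag2[OF injs] by simp
    finally show ?thesis .
  qed
  ultimately show ?thesis using s(2) M(2) by (auto simp: Sp_def)
qed



lemma JJt: "Jmat ** transpose Jmat = (mat 1 :: ('n::finite) mat2n)"
  by (subst matrix_eq) (simp add: matrix_vector_mul_assoc[symmetric] Jt_v mv_neg_right JJ_v del: transpose_matrix_vector)

lemma JtJ: "transpose Jmat ** Jmat = (mat 1 :: ('n::finite) mat2n)"
  by (subst matrix_eq) (simp add: matrix_vector_mul_assoc[symmetric] Jt_v JJ_v mv_neg_right del: transpose_matrix_vector)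

lemma mm_rneg: "M ** (- X) = - (M ** (X::real^'n^'n))"
  by (simp add: matrix_matrix_mult_def vec_eq_iff sum_negf)

lemma mm_lneg: "(- X) ** M = - (X ** (M::real^'n^'n))"
  by (simp add: matrix_matrix_mult_def vec_eq_iff sum_negf)

lemma diag2_v: "(diag2 d *v x) $ Inl a = d a * x $ Inl a" "(diag2 d *v x) $ Inr a = d a * x $ Inr a"
proof -
  have "(diag2 d *v x) $ Inl a = (\<Sum>j\<in>UNIV. (if Inl a = j then d a else 0) * x $ j)"
    unfolding matrix_vector_mult_def diag2_def by (auto intro!: sum.cong)
  also have "\<dots> = d a * x $ Inl a" by (rule sum_delta_mult)
  finally show "(diag2 d *v x) $ Inl a = d a * x $ Inl a" .
  have "(diag2 d *v x) $ Inr a = (\<Sum>j\<in>UNIV. (if Inr a = j then d a else 0) * x $ j)"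
    unfolding matrix_vector_mult_def diag2_def by (auto intro!: sum.cong)
  also have "\<dots> = d a * x $ Inr a" by (rule sum_delta_mult)
  finally show "(diag2 d *v x) $ Inr a = d a * x $ Inr a" .
qed

lemma JDJD: "(Jmat ** diag2 d) ** (Jmat ** diag2 d) = - diag2 (\<lambda>i. (d i)^2)"
  by (subst matrix_eq) (simp add: matrix_vector_mul_assoc[symmetric] mv_neg_left vec_eq_Plus diag2_v power2_eq_square)

lemma symp_inverse:
  fixes M :: "('n::finite) mat2n"
  assumes "symplectic M"
  shows "(transpose Jmat ** transpose M ** Jmat) ** M = mat 1" "M ** (transpose Jmat ** transpose M ** Jmat) = mat 1"
proof -
  have "(transpose Jmat ** transpose M ** Jmat) ** M = transpose Jmat ** (transpose M ** Jmat ** M)"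
    by (simp add: matrix_mul_assoc)
  also have "\<dots> = mat 1" using assms unfolding symplectic_def by (simp add: JtJ)
  finally show 1: "(transpose Jmat ** transpose M ** Jmat) ** M = mat 1" .
  show "M ** (transpose Jmat ** transpose M ** Jmat) = mat 1"
    using 1 matrix_left_right_inverse by blast
qed

lemma conj_key:
  fixes M A :: "('n::finite) mat2n"
  assumes S: "symplectic M" and D: "transpose M ** A ** M = diag2 d"
  shows "(Jmat ** A) ** M = M ** (Jmat ** diag2 d)"
proof -
  define L where "L = transpose Jmat ** transpose M ** Jmat"
  have LMinv: "L ** M = mat 1" and MLinv: "M ** L = mat 1" using symp_inverse[OF S] by (simp_all add: L_def)
  have "A = transpose L ** (transpose M ** A ** M) ** L"
  proof -
    have "transpose L ** (transpose M ** A ** M) ** L = transpose (M ** L) ** A ** (M ** L)"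
      by (simp add: matrix_transpose_mul matrix_mul_assoc)
    thus ?thesis using MLinv by simp
  qed
  hence "A = transpose L ** diag2 d ** L" using D by simp
  hence "(Jmat ** A) ** M = (Jmat ** transpose L ** diag2 d) ** (L ** M)" by (simp add: matrix_mul_assoc)
  hence "(Jmat ** A) ** M = Jmat ** transpose L ** diag2 d" using LMinv by simp
  also have "Jmat ** transpose L = M ** Jmat"
  proof -
    have "Jmat ** transpose L = (Jmat ** transpose Jmat) ** M ** Jmat"
      by (simp add: L_def matrix_transpose_mul matrix_mul_assoc)
    thus ?thesis by (simp add: JJt)
  qed
  finally show ?thesis by (simp add: matrix_mul_assoc)
qed

definition eigsp :: "('n::finite) mat2n \<Rightarrow> real \<Rightarrow> (real^('n+'n)) set" where
  "eigsp Y t = {x. Y *v x = t *\<^sub>R x}"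

lemma eigsp_conj:
  fixes M Y :: "('n::finite) mat2n"
  assumes YM: "Y ** M = M ** Delta" and MLinv: "M ** L = mat 1" and LMinv: "L ** M = mat 1"
  shows "eigsp Y t = (\<lambda>x. M *v x) ` eigsp Delta t"
proof (intro set_eqI iffI)
  fix y assume "y \<in> eigsp Y t"
  hence y: "Y *v y = t *\<^sub>R y" by (simp add: eigsp_def)
  define x where "x = L *v y"
  have Mx: "M *v x = y" using MLinv by (simp add: x_def matrix_vector_mul_assoc)
  have "M *v (Delta *v x) = Y *v (M *v x)" using YM by (simp add: matrix_vector_mul_assoc)
  also have "\<dots> = M *v (t *\<^sub>R x)" using y Mx by (simp add: matrix_vector_mult_scaleR)
  finally have "L *v (M *v (Delta *v x)) = L *v (M *v (t *\<^sub>R x))" by simp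
  hence "(L ** M) *v (Delta *v x) = (L ** M) *v (t *\<^sub>R x)" by (simp only: matrix_vector_mul_assoc matrix_mul_assoc)
  hence "Delta *v x = t *\<^sub>R x" using LMinv by simp
  thus "y \<in> (\<lambda>x. M *v x) ` eigsp Delta t" using Mx by (auto simp: eigsp_def)
next
  fix y assume "y \<in> (\<lambda>x. M *v x) ` eigsp Delta t"
  then obtain x where x: "Delta *v x = t *\<^sub>R x" "y = M *v x" by (auto simp: eigsp_def)
  have "Y *v y = M *v (Delta *v x)" using YM x(2) by (simp add: matrix_vector_mul_assoc)
  thus "y \<in> eigsp Y t" using x by (simp add: eigsp_def matrix_vector_mult_scaleR)
qed

lemma dim_eigsp_conj:
  fixes M Y :: "('n::finite) mat2n"
  assumes YM: "Y ** M = M ** Delta" and MLinv: "M ** L = mat 1" and LMinv: "L ** M = mat 1"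
  shows "dim (eigsp Y t) = dim (eigsp Delta t)"
proof -
  have inj: "inj ((*v) M)"
  proof (rule injI)
    fix x y assume "M *v x = M *v y"
    hence "L *v (M *v x) = L *v (M *v y)" by simp
    hence "(L ** M) *v x = (L ** M) *v y" by (simp only: matrix_vector_mul_assoc)
    thus "x = y" using LMinv by simp
  qed
  have "dim ((\<lambda>x. M *v x) ` eigsp Delta t) = dim (eigsp Delta t)"
    by (rule dim_image_eq[OF matrix_vector_mul_linear inj_on_subset[OF inj subset_UNIV]])
  thus ?thesis unfolding eigsp_conj[OF assms] .
qed

lemma dim_eigsp_diag2:
  fixes d :: "'n::finite \<Rightarrow> real"
  shows "dim (eigsp (diag2 d) t) = 2 * card {i. d i = t}"
proof -
  define S0 where "S0 = {i. d i = t}"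
  have "eigsp (diag2 d) t = {x::real^('n+'n). \<forall>k. k \<notin> S0 <+> S0 \<longrightarrow> x $ k = 0}"
  proof (intro set_eqI iffI)
    fix x assume "x \<in> eigsp (diag2 d) t"
    hence "\<forall>a. d a * x $ Inl a = t * x $ Inl a" "\<forall>a. d a * x $ Inr a = t * x $ Inr a"
      by (auto simp: eigsp_def vec_eq_Plus diag2_v)
    hence "x $ k = 0" if "k \<notin> S0 <+> S0" for k
      using that by (cases k) (auto simp: S0_def)
    thus "x \<in> {x::real^('n+'n). \<forall>k. k \<notin> S0 <+> S0 \<longrightarrow> x $ k = 0}" by blast
  next
    fix x assume "x \<in> {x::real^('n+'n). \<forall>k. k \<notin> S0 <+> S0 \<longrightarrow> x $ k = 0}"
    hence "\<forall>a. d a \<noteq> t \<longrightarrow> x $ Inl a = 0" "\<forall>a. d a \<noteq> t \<longrightarrow> x $ Inr a = 0"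
      by (auto simp: S0_def)
    thus "x \<in> eigsp (diag2 d) t"
      unfolding eigsp_def vec_eq_Plus by (auto simp: diag2_v)
  qed
  hence "dim (eigsp (diag2 d) t) = card (S0 <+> S0)"
  proof -
    have "vec.dim {x::real^('n+'n). \<forall>k. k \<notin> S0 <+> S0 \<longrightarrow> x $ k = 0} = card (S0 <+> S0)"
      by (rule dim_substandard_cart)
    thus ?thesis using \<open>eigsp (diag2 d) t = _\<close> by (simp add: dim_vec_eq)
  qed
  also have "\<dots> = 2 * card S0" by (simp add: card_Plus)
  finally show ?thesis by (simp add: S0_def)
qed

lemma mono_count_eq:
  fixes d e :: "'n::{finite,linorder} \<Rightarrow> real"
  assumes md: "mono d" and me: "mono e" and c: "\<And>s. card {i. d i = s} = card {i. e i = s}"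
  shows "d = e"
proof -
  define V where "V = range d \<union> range e"
  have finV: "finite V" by (simp add: V_def)
  have cle: "card {i. g i \<le> s} = (\<Sum>v\<in>{v\<in>V. v \<le> s}. card {i. g i = v})" if "range g \<subseteq> V" for g :: "'n \<Rightarrow> real" and s
  proof -
    have "{i. g i \<le> s} = (\<Union>v\<in>{v\<in>V. v \<le> s}. {i. g i = v})" using that by blast
    moreover have "card (\<Union>v\<in>{v\<in>V. v \<le> s}. {i. g i = v}) = (\<Sum>v\<in>{v\<in>V. v \<le> s}. card {i. g i = v})"
    proof (rule card_UN_disjoint)
      show "finite {v \<in> V. v \<le> s}" using finV by simp
      show "\<forall>v\<in>{v \<in> V. v \<le> s}. finite {i. g i = v}" by simp
      show "\<forall>v\<in>{v \<in> V. v \<le> s}. \<forall>w\<in>{v \<in> V. v \<le> s}. v \<noteq> w \<longrightarrow> {i. g i = v} \<inter> {i. g i = w} = {}"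
        by blast
    qed
    ultimately show ?thesis by simp
  qed
  have N: "card {i. d i \<le> s} = card {i. e i \<le> s}" for s
  proof -
    have "card {i. d i \<le> s} = (\<Sum>v\<in>{v\<in>V. v \<le> s}. card {i. d i = v})" by (rule cle) (auto simp: V_def)
    also have "\<dots> = (\<Sum>v\<in>{v\<in>V. v \<le> s}. card {i. e i = v})" using c by simp
    also have "\<dots> = card {i. e i \<le> s}" by (rule cle[symmetric]) (auto simp: V_def)
    finally show ?thesis .
  qed
  have key: "g j \<le> s \<longleftrightarrow> card {..j} \<le> card {i. g i \<le> s}" if mg: "mono g" for g :: "'n \<Rightarrow> real" and j s
  proof
    assume gj: "g j \<le> s"
    have "{..j} \<subseteq> {i. g i \<le> s}"
    proof
      fix i assume "i \<in> {..j}"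
      hence "g i \<le> g j" using mg by (simp add: monoD)
      thus "i \<in> {i. g i \<le> s}" using gj by simp
    qed
    thus "card {..j} \<le> card {i. g i \<le> s}" by (rule card_mono[rotated]) simp
  next
    assume a: "card {..j} \<le> card {i. g i \<le> s}"
    show "g j \<le> s"
    proof (rule ccontr)
      assume gj: "\<not> g j \<le> s"
      have "{i. g i \<le> s} \<subseteq> {..<j}"
      proof
        fix i assume i: "i \<in> {i. g i \<le> s}"
        show "i \<in> {..<j}"
        proof (rule ccontr)
          assume "i \<notin> {..<j}"
          hence "j \<le> i" by simp
          hence "g j \<le> g i" using mg by (simp add: monoD)
          thus False using i gj by simp
        qed
      qed
      hence "card {i. g i \<le> s} \<le> card {..<j}" by (rule card_mono[rotated]) simp
      moreover have "card {..<j} < card {..j}" by (rule psubset_card_mono) auto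
      ultimately show False using a by simp
    qed
  qed
  have iff: "d j \<le> s \<longleftrightarrow> e j \<le> s" for j s using key[OF md, of j s] key[OF me, of j s] N[of s] by simp
  have "d j = e j" for j
  proof -
    have "d j \<le> e j" using iff[of j "e j"] by simp
    moreover have "e j \<le> d j" using iff[of j "d j"] by simp
    ultimately show ?thesis by simp
  qed
  thus ?thesis by blast
qed

lemma symp_unique:
  fixes A :: "('n::{finite,linorder}) mat2n"
  assumes M: "symplectic M" "transpose M ** A ** M = diag2 d" "mono d" "\<forall>i. 0 \<le> d i"
    and N: "symplectic N" "transpose N ** A ** N = diag2 e" "mono e" "\<forall>i. 0 \<le> e i"
  shows "d = e"
proof -
  define Y where "Y = - ((Jmat ** A) ** (Jmat ** A))"
  have YM: "Y ** M = M ** diag2 (\<lambda>i. (d i)^2)" if "symplectic M" "transpose M ** A ** M = diag2 d" for M d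
  proof -
    have c: "(Jmat ** A) ** M = M ** (Jmat ** diag2 d)" by (rule conj_key[OF that])
    have "((Jmat ** A) ** (Jmat ** A)) ** M = (Jmat ** A) ** ((Jmat ** A) ** M)"
      by (simp only: matrix_mul_assoc)
    also have "\<dots> = ((Jmat ** A) ** M) ** (Jmat ** diag2 d)" by (simp only: c matrix_mul_assoc)
    also have "\<dots> = M ** ((Jmat ** diag2 d) ** (Jmat ** diag2 d))" by (simp only: c matrix_mul_assoc)
    finally have "((Jmat ** A) ** (Jmat ** A)) ** M = M ** ((Jmat ** diag2 d) ** (Jmat ** diag2 d))" .
    hence "((Jmat ** A) ** (Jmat ** A)) ** M = - (M ** diag2 (\<lambda>i. (d i)^2))"
      by (simp add: JDJD mm_rneg)
    thus ?thesis by (simp add: Y_def mm_lneg)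
  qed
  have cnt: "card {i. (d i)^2 = t} = card {i. (e i)^2 = t}" for t
  proof -
    have "dim (eigsp Y t) = dim (eigsp (diag2 (\<lambda>i. (d i)^2)) t)"
      using YM[OF M(1,2)] symp_inverse[OF M(1)] by (intro dim_eigsp_conj) auto
    moreover have "dim (eigsp Y t) = dim (eigsp (diag2 (\<lambda>i. (e i)^2)) t)"
      using YM[OF N(1,2)] symp_inverse[OF N(1)] by (intro dim_eigsp_conj) auto
    ultimately show ?thesis by (simp add: dim_eigsp_diag2)
  qed
  have "card {i. d i = s} = card {i. e i = s}" for s
  proof (cases "s \<ge> 0")
    case True
    have "{i. d i = s} = {i. (d i)^2 = s^2}" "{i. e i = s} = {i. (e i)^2 = s^2}"
      using M(4) N(4) True by auto
    thus ?thesis using cnt by simp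
  next
    case False
    hence "{i. d i = s} = {}" "{i. e i = s} = {}" using M(4) N(4) by auto
    thus ?thesis by simp
  qed
  thus ?thesis by (rule mono_count_eq[OF M(3) N(3)])
qed

lemma symp_eigs_char:
  fixes A :: "('n::{finite,linorder}) mat2n"
  assumes psd: "psd_sym A" and ker: "symplectic_subspace (kernel A)"
  shows "\<exists>M\<in>Sp. (\<forall>i. 0 \<le> symp_eigs A i) \<and> transpose M ** A ** M = diag2 (symp_eigs A)"
proof -
  obtain M d where Md: "M \<in> Sp" "mono d" "\<forall>i. 0 \<le> d i" "transpose M ** A ** M = diag2 d"
    using williamson[OF psd ker] by blast
  have "symp_eigs A = d" unfolding symp_eigs_def
  proof (rule the_equality)
    show "mono d \<and> (\<forall>i. 0 \<le> d i) \<and> (\<exists>M\<in>Sp. transpose M ** A ** M = diag2 d)" using Md by blast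
  next
    fix e assume "mono e \<and> (\<forall>i. 0 \<le> e i) \<and> (\<exists>M\<in>Sp. transpose M ** A ** M = diag2 e)"
    then obtain N where "N \<in> Sp" "mono e" "\<forall>i. 0 \<le> e i" "transpose N ** A ** N = diag2 e" by blast
    thus "e = d" using symp_unique[of N A e M d] Md by (auto simp: Sp_def)
  qed
  thus ?thesis using Md by blast
qed



lemma mm_scaleR_left: "(c *\<^sub>R X) ** M = c *\<^sub>R (X ** (M::real^'n^'n))"
  by (simp add: matrix_matrix_mult_def vec_eq_iff sum_distrib_left mult.assoc)

lemma mm_scaleR_right: "M ** (c *\<^sub>R X) = c *\<^sub>R (M ** (X::real^'n^'n))"
  by (simp add: matrix_matrix_mult_def vec_eq_iff sum_distrib_left mult.left_commute)

lemma mm_zero_left: "(0::real^'n^'n) ** M = 0"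
  by (simp add: matrix_matrix_mult_def vec_eq_iff)

lemma mm_zero_right: "M ** (0::real^'n^'n) = 0"
  by (simp add: matrix_matrix_mult_def vec_eq_iff)

lemma mm_add_rdistrib: "(X + Y) ** M = X ** M + Y ** (M::real^'n^'n)"
  by (simp add: matrix_matrix_mult_def vec_eq_iff sum.distrib distrib_right)

lemma tmm_sum:
  fixes M :: "real^'n^'n"
  assumes "finite F"
  shows "(\<Sum>x\<in>F. c x *\<^sub>R (transpose M ** X x ** M)) = transpose M ** (\<Sum>x\<in>F. c x *\<^sub>R X x) ** M"
  using assms
proof (induction F rule: finite_induct)
  case empty then show ?case by (simp add: mm_zero_left mm_zero_right)
next
  case (insert y F)
  then show ?case
    by (simp add: matrix_add_ldistrib mm_add_rdistrib mm_scaleR_left mm_scaleR_right)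
qed

lemma diag2_sum:
  fixes g :: "'a \<Rightarrow> 'n::finite \<Rightarrow> real"
  shows "(\<Sum>x\<in>F. c x *\<^sub>R diag2 (g x)) = diag2 (\<lambda>i. \<Sum>x\<in>F. c x * g x i)"
  by (rule mat2n_eqI) (auto simp: if_distrib sum.neutral cong: if_cong)

lemma diag2_mult: "diag2 x ** diag2 y = diag2 (\<lambda>i. x i * y i)"
  by (subst matrix_eq) (simp add: matrix_vector_mul_assoc[symmetric] vec_eq_Plus diag2_v mult.assoc)

lemma diag2_transpose: "transpose (diag2 x) = diag2 x"
  by (rule mat2n_eqI) (simp_all add: transpose_def)

lemma perm_sum:
  fixes h :: "'n::finite \<Rightarrow> real"
  shows "(\<Sum>p\<in>{p. p permutes (UNIV::'n set)}. h (p i)) = fact CARD('n) / CARD('n) * (\<Sum>j\<in>UNIV. h j)"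
proof -
  let ?P = "{p. p permutes (UNIV::'n set)}"
  have eq: "(\<Sum>p\<in>?P. h (p i)) = (\<Sum>p\<in>?P. h (p k))" for k
  proof -
    have "Transposition.transpose i k permutes (UNIV::'n set)" by (rule permutes_swap_id) auto
    hence "(\<Sum>p\<in>?P. h (p k)) = (\<Sum>p\<in>?P. h ((p \<circ> Transposition.transpose i k) k))"
      by (rule sum_permutations_compose_right)
    thus ?thesis by simp
  qed
  have inner: "(\<Sum>k\<in>UNIV. h (p k)) = (\<Sum>j\<in>UNIV. h j)" if "p permutes (UNIV::'n set)" for p
  proof -
    have "inj p" using permutes_inj[OF that] .
    moreover have "p ` UNIV = UNIV" using permutes_image[OF that] .
    ultimately show ?thesis using sum.reindex[of p UNIV h] by simp
  qed
  have "(\<Sum>k\<in>UNIV. \<Sum>p\<in>?P. h (p k)) = (\<Sum>k\<in>(UNIV::'n set). \<Sum>p\<in>?P. h (p i))"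
  proof -
    have "(\<lambda>k. \<Sum>p\<in>?P. h (p k)) = (\<lambda>k::'n. \<Sum>p\<in>?P. h (p i))" by (rule ext) (rule eq[symmetric])
    thus ?thesis by (rule arg_cong)
  qed
  hence "real CARD('n) * (\<Sum>p\<in>?P. h (p i)) = (\<Sum>k\<in>UNIV. \<Sum>p\<in>?P. h (p k))"
    by simp
  also have "\<dots> = (\<Sum>p\<in>?P. \<Sum>k\<in>UNIV. h (p k))" by (rule sum.swap)
  also have "\<dots> = (\<Sum>p\<in>?P. \<Sum>j\<in>UNIV. h j)" using inner by simp
  also have "\<dots> = fact CARD('n) * (\<Sum>j\<in>UNIV. h j)"
    using card_permutations[of "UNIV::'n set" "CARD('n)"] by simp
  finally show ?thesis by (simp add: field_simps)
qed



theorem theorem3p2: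
  fixes A B :: "('n::{finite,linorder}) mat2n"
  assumes "psd_sym A" and "psd_sym B"
    and "symplectic_subspace (kernel A)" and "symplectic_subspace (kernel B)"
    and "wsub_plus (symp_eigs A) (symp_eigs B)"
  shows "\<exists>(p :: ('n \<Rightarrow> 'n) \<Rightarrow> real) (K :: ('n \<Rightarrow> 'n) \<Rightarrow> 'n mat2n)
            (D :: ('n \<Rightarrow> 'n) \<Rightarrow> 'n mat2n) (M :: 'n mat2n).
           (\<forall>\<pi>. \<pi> permutes (UNIV :: 'n set) \<longrightarrow>
                0 \<le> p \<pi> \<and> K \<pi> \<in> Sp \<and> diagonal_pos (D \<pi>)) \<and>
           (\<Sum>\<pi> \<in> {\<pi>. \<pi> permutes (UNIV :: 'n set)}. p \<pi>) = 1 \<and>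
           M \<in> Sp \<and>
           A = (\<Sum>\<pi> \<in> {\<pi>. \<pi> permutes (UNIV :: 'n set)}.
                  p \<pi> *\<^sub>R (transpose (K \<pi> ** D \<pi> ** M) ** B ** (K \<pi> ** D \<pi> ** M)))"
proof -
  define a where "a = symp_eigs A"
  define b where "b = symp_eigs B"
  obtain MA where MA: "MA \<in> Sp" "transpose MA ** A ** MA = diag2 a"
    using symp_eigs_char[OF assms(1,3)] by (auto simp: a_def)
  obtain MB where MB: "MB \<in> Sp" "transpose MB ** B ** MB = diag2 b"
    using symp_eigs_char[OF assms(2,4)] by (auto simp: b_def)
  obtain S where S: "\<And>i j. 0 < S$i$j" "\<And>i. a i = (\<Sum>j\<in>UNIV. S$i$j * b j)"
    using assms(5) unfolding wsub_plus_def a_def b_def by blast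
  have symMA: "symplectic MA" and symMB: "symplectic MB" using MA MB by (auto simp: Sp_def)
  define L where "L = transpose Jmat ** transpose MA ** Jmat"
  have LMA: "L ** MA = mat 1" and MAL: "MA ** L = mat 1" using symp_inverse[OF symMA] by (simp_all add: L_def)
  have symL: "symplectic L"
  proof -
    have "transpose L ** Jmat ** L = transpose L ** (transpose MA ** Jmat ** MA) ** L"
      using symMA by (simp add: symplectic_def)
    also have "\<dots> = transpose (MA ** L) ** Jmat ** (MA ** L)"
      by (simp add: matrix_transpose_mul matrix_mul_assoc)
    also have "\<dots> = Jmat" using MAL by simp
    finally show ?thesis by (simp add: symplectic_def)
  qed
  have Aeq: "A = transpose L ** diag2 a ** L"
  proof -
    have "transpose L ** (transpose MA ** A ** MA) ** L = transpose (MA ** L) ** A ** (MA ** L)"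
      by (simp add: matrix_transpose_mul matrix_mul_assoc)
    thus ?thesis using MAL MA(2) by simp
  qed
  define n :: real where "n = real CARD('n)"
  have npos: "n > 0" by (simp add: n_def)
  define P where "P = {\<pi>. \<pi> permutes (UNIV :: 'n set)}"
  define c where "c \<pi> i = sqrt (n * S$i$(\<pi> i))" for \<pi> :: "'n \<Rightarrow> 'n" and i
  have cpos: "c \<pi> i > 0" for \<pi> i using npos S(1) by (simp add: c_def)
  have cc: "c \<pi> i * c \<pi> i = n * S$i$(\<pi> i)" for \<pi> i
    using npos S(1)[of i "\<pi> i"] by (simp add: c_def)
  define p :: "('n \<Rightarrow> 'n) \<Rightarrow> real" where "p \<pi> = 1 / fact CARD('n)" for \<pi>
  define K where "K \<pi> = MB ** Pm \<pi>" for \<pi> :: "'n \<Rightarrow> 'n"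
  define D where "D \<pi> = diag2 (c \<pi>)" for \<pi> :: "'n \<Rightarrow> 'n"
  define g where "g \<pi> i = n * S$i$(\<pi> i) * b (\<pi> i)" for \<pi> :: "'n \<Rightarrow> 'n" and i
  have cond: "0 \<le> p \<pi> \<and> K \<pi> \<in> Sp \<and> diagonal_pos (D \<pi>)" if "\<pi> permutes (UNIV :: 'n set)" for \<pi>
  proof -
    have "K \<pi> \<in> Sp" using symplectic_mult[OF symMB Pm_symplectic[OF permutes_inj[OF that]]]
      by (simp add: K_def Sp_def)
    moreover have "diagonal_pos (D \<pi>)"
      unfolding diagonal_pos_def D_def diag2_def using cpos by (auto split: sum.splits)
    ultimately show ?thesis by (simp add: p_def)
  qed
  have psum: "(\<Sum>\<pi>\<in>P. p \<pi>) = 1"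
    using card_permutations[of "UNIV::'n set" "CARD('n)"] by (simp add: P_def p_def)
  have termeq: "transpose (K \<pi> ** D \<pi> ** L) ** B ** (K \<pi> ** D \<pi> ** L) = transpose L ** diag2 (g \<pi>) ** L"
    if "\<pi> permutes (UNIV :: 'n set)" for \<pi>
  proof -
    have inj: "inj \<pi>" using permutes_inj[OF that] .
    have "transpose (K \<pi> ** D \<pi> ** L) ** B ** (K \<pi> ** D \<pi> ** L) =
      transpose L ** (transpose (D \<pi>) ** (transpose (Pm \<pi>) ** (transpose MB ** B ** MB) ** Pm \<pi>) ** D \<pi>) ** L"
      by (simp add: K_def matrix_transpose_mul matrix_mul_assoc)
    also have "\<dots> = transpose L ** (D \<pi> ** diag2 (\<lambda>i. b (\<pi> i)) ** D \<pi>) ** L"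
      using MB(2) Pm_diag2[OF inj] by (simp add: D_def diag2_transpose)
    also have "D \<pi> ** diag2 (\<lambda>i. b (\<pi> i)) ** D \<pi> = diag2 (g \<pi>)"
    proof -
      have "(\<lambda>i. c \<pi> i * b (\<pi> i) * c \<pi> i) = g \<pi>"
      proof
        fix i
        have "c \<pi> i * b (\<pi> i) * c \<pi> i = (c \<pi> i * c \<pi> i) * b (\<pi> i)" by (simp add: mult_ac)
        also have "\<dots> = g \<pi> i" by (simp add: cc g_def)
        finally show "c \<pi> i * b (\<pi> i) * c \<pi> i = g \<pi> i" .
      qed
      thus ?thesis by (simp add: D_def diag2_mult)
    qed
    finally show ?thesis .
  qed
  have gsum: "(\<Sum>\<pi>\<in>P. p \<pi> * g \<pi> i) = a i" for i
  proof -
    have "(\<Sum>\<pi>\<in>P. p \<pi> * g \<pi> i) = (n / fact CARD('n)) * (\<Sum>\<pi>\<in>P. S$i$(\<pi> i) * b (\<pi> i))"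
      by (simp add: p_def g_def sum_distrib_left mult.assoc)
    also have "(\<Sum>\<pi>\<in>P. S$i$(\<pi> i) * b (\<pi> i)) = fact CARD('n) / CARD('n) * (\<Sum>j\<in>UNIV. S$i$j * b j)"
      unfolding P_def by (rule perm_sum[where h = "\<lambda>j. S$i$j * b j"])
    also have "n / fact CARD('n) * (fact CARD('n) / CARD('n) * (\<Sum>j\<in>UNIV. S$i$j * b j)) = (\<Sum>j\<in>UNIV. S$i$j * b j)"
      using npos by (simp add: n_def)
    also have "\<dots> = a i" using S(2) by simp
    finally show ?thesis .
  qed
  have "(\<Sum>\<pi>\<in>P. p \<pi> *\<^sub>R (transpose (K \<pi> ** D \<pi> ** L) ** B ** (K \<pi> ** D \<pi> ** L)))
      = (\<Sum>\<pi>\<in>P. p \<pi> *\<^sub>R (transpose L ** diag2 (g \<pi>) ** L))"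
    by (rule sum.cong) (auto simp: P_def termeq)
  also have "\<dots> = transpose L ** (\<Sum>\<pi>\<in>P. p \<pi> *\<^sub>R diag2 (g \<pi>)) ** L"
    by (rule tmm_sum) (simp add: P_def)
  also have "(\<Sum>\<pi>\<in>P. p \<pi> *\<^sub>R diag2 (g \<pi>)) = diag2 a"
    unfolding diag2_sum gsum ..
  finally have "A = (\<Sum>\<pi>\<in>P. p \<pi> *\<^sub>R (transpose (K \<pi> ** D \<pi> ** L) ** B ** (K \<pi> ** D \<pi> ** L)))"
    using Aeq by simp
  thus ?thesis using cond psum symL unfolding P_def
    by (intro exI[of _ p] exI[of _ K] exI[of _ D] exI[of _ L]) (auto simp: Sp_def)
qed

end
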